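(* Consider, for $x\ge0$, the planar system $$\dot x=1,\qquad \dot y=-ay-\sin\!\left[\pi x\left(1+\tfrac12\lambda\right)\right],$$ with $\lambda=\operatorname{sign}(y)$ for $y\ne0$ and $\lambda\in(-1,1)$ on $y=0$. For all $a>0$ there exist solutions that start in $S_+=\{y>0\}$ and whose evolution is constrained to $\overline S_-=\{y\le0\}$ for all $x>x_{T_a}$, where $x_{T_a}$ denotes the smallest $x$ at which they hit the switching line $y=0$. Moreover, these solutions coincide with the periodic solution $y_d$ described below for $x\ge 4n$, for some $n\in\mathbb{N}$.
   Context: For $y>0$ the system is $\dot y=-ay-\sin(3\pi x/2)$ and for $y<0$ it is $\dot y=-ay-\sin(\pi x/2)$. The sliding manifold is $\Lambda^N=\{(x,0):x\in(\frac{2n}{3},2n),\ n\ge1\}$; a solution may remain on $y=0$ (with $\dot x=1$) over an interval only while on $\Lambda^N$. The function $y_d$ is the sliding $4$-periodic solution lying in $\{y\le0\}$ with $y_d(x)<0$ for $x\in(4n,4n+x_a)$ and $y_d(x)=0$ for $x\in\{0\}\cup[4n+x_a,4(n+1)]$, $n\in\mathbb{N}$, where $x_a\in(2,4)$ is the first positive return to $y=0$ of the solution of $\dot y=-ay-\sin(\pi x/2)$, $y(0)=0$. *)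

theory Defs
  imports "HOL-Analysis.Analysis"
begin

definition rhs :: "real \<Rightarrow> real \<Rightarrow> real \<Rightarrow> real set" where
  "rhs a x y = {- a * y - sin (pi * x * (1 + l / 2)) | l.
      (y \<noteq> 0 \<and> l = sgn y) \<or> (y = 0 \<and> -1 < l \<and> l < 1)}"

definition is_solution :: "real \<Rightarrow> real \<Rightarrow> (real \<Rightarrow> real) \<Rightarrow> bool" where
  "is_solution a x0 y \<longleftrightarrow>
     (\<exists>g N. negligible N \<and>
        (\<forall>x\<ge>x0. g integrable_on {x0..x} \<and> y x = y x0 + integral {x0..x} g) \<and>
        (\<forall>t\<in>{x0..} - N. g t \<in> rhs a t (y t)))"

definition zsol :: "real \<Rightarrow> real \<Rightarrow> real" where
  "zsol a = (THE z. z 0 = 0 \<and>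
      (\<forall>x. (z has_real_derivative (- a * z x - sin (pi * x / 2))) (at x)))"

definition x_a :: "real \<Rightarrow> real" where
  "x_a a = Inf {x. x > 0 \<and> zsol a x = 0}"

definition y_d :: "real \<Rightarrow> real \<Rightarrow> real" where
  "y_d a x = (let r = x - 4 * of_int \<lfloor>x / 4\<rfloor> in if r < x_a a then zsol a r else 0)"

end

theory Submission imports Defs begin

definition fsol :: "real \<Rightarrow> real \<Rightarrow> real \<Rightarrow> real \<Rightarrow> real" where
  "fsol a b c x = -(a * sin (b*x) - b * cos (b*x)) / (a^2+b^2) + c * exp (-a*x)"

lemma fsol_deriv:
  assumes "a > 0"
  shows "(fsol a b c has_real_derivative (-a * fsol a b c x - sin (b*x))) (at x)"
proof -
  have D: "a^2+b^2 > 0" using assms by (simp add: add_pos_nonneg)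
  have "(fsol a b c has_real_derivative
     (-(a * (cos (b*x) * b) - b * (- sin (b*x) * b)) / (a^2+b^2) + c * (exp (-a*x) * (-a)))) (at x)"
    unfolding fsol_def[abs_def] using D
    by (auto intro!: derivative_eq_intros)
  moreover have "-(a * (cos (b*x) * b) - b * (- sin (b*x) * b)) / (a^2+b^2) + c * (exp (-a*x) * (-a))
      = -a * fsol a b c x - sin (b*x)"
    using D unfolding fsol_def by (simp add: divide_simps) (simp add: algebra_simps power2_eq_square)
  ultimately show ?thesis by simp
qed

lemma w_deriv:
  assumes "a > 0"
  shows "((\<lambda>x. exp (a*x) * fsol a b c x) has_real_derivative (-exp (a*x) * sin (b*x))) (at x)"
proof -
  have "((\<lambda>x. exp (a*x) * fsol a b c x) has_real_derivative
      (exp (a*x) * a * fsol a b c x + exp (a*x) * (-a * fsol a b c x - sin (b*x)))) (at x)"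
    by (auto intro!: derivative_eq_intros fsol_deriv[OF assms])
  then show ?thesis by (simp add: algebra_simps)
qed

definition Z :: "real \<Rightarrow> real \<Rightarrow> real" where
  "Z a = fsol a (pi/2) (-(pi/2)/(a^2+(pi/2)^2))"

lemma Z0: "Z a 0 = 0" unfolding Z_def fsol_def by simp

lemma Z_deriv: "a > 0 \<Longrightarrow> (Z a has_real_derivative (- a * Z a x - sin (pi * x / 2))) (at x)"
  unfolding Z_def using fsol_deriv[of a "pi/2" _ x] by (simp add: mult.commute)

lemma zsol_eq:
  assumes "a > 0"
  shows "zsol a = Z a"
  unfolding zsol_def
proof (rule the_equality)
  show "Z a 0 = 0 \<and> (\<forall>x. (Z a has_real_derivative - a * Z a x - sin (pi * x / 2)) (at x))"
    using Z0 Z_deriv[OF assms] by blast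
next
  fix z assume h: "z 0 = 0 \<and> (\<forall>x. (z has_real_derivative - a * z x - sin (pi * x / 2)) (at x))"
  define d where "d x = exp (a*x) * (z x - Z a x)" for x
  have "\<forall>x. (d has_real_derivative 0) (at x)"
  proof
    fix x
    have "(d has_real_derivative (exp (a*x) * a * (z x - Z a x) +
        exp (a*x) * ((- a * z x - sin (pi * x / 2)) - (- a * Z a x - sin (pi * x / 2))))) (at x)"
      unfolding d_def[abs_def] using h Z_deriv[OF assms]
      by (auto intro!: derivative_eq_intros)
    then show "(d has_real_derivative 0) (at x)" by (simp add: algebra_simps)
  qed
  then have "\<And>x. d x = d 0" by (metis DERIV_isconst_all)
  then have "\<And>x. d x = 0" using h Z0 by (simp add: d_def)
  then show "z = Z a" by (auto simp: d_def fun_eq_iff)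
qed


lemma Zcont: "a > 0 \<Longrightarrow> continuous_on S (Z a)"
  by (meson DERIV_isCont Z_deriv continuous_at_imp_continuous_on)

lemma Z_neg:
  assumes "a > 0" "0 < x" "x \<le> 2"
  shows "Z a x < 0"
proof -
  define W where "W t = exp (a*t) * Z a t" for t
  have dW: "(W has_real_derivative (-exp (a*t) * sin (pi/2*t))) (at t)" for t
    unfolding W_def Z_def using w_deriv[OF assms(1)] by blast
  have "W x < W 0"
  proof (rule DERIV_neg_imp_decreasing_open[OF assms(2)])
    fix t assume t: "0 < t" "t < x"
    have "sin (pi/2*t) > 0" using t assms by (intro sin_gt_zero) auto
    then show "\<exists>y. (W has_real_derivative y) (at t) \<and> y < 0"
      using dW[of t] by (intro exI[of _ "-exp (a*t) * sin (pi/2*t)"]) auto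
  next
    show "continuous_on {0..x} W"
      by (meson DERIV_isCont dW continuous_at_imp_continuous_on)
  qed
  then show ?thesis using Z0[of a] by (simp add: W_def mult_less_0_iff)
qed

lemma Z4: "a > 0 \<Longrightarrow> Z a 4 > 0"
proof -
  assume a: "a > 0"
  have s: "sin (pi/2*4) = 0" "cos (pi/2*4) = 1"
    by (simp_all add: sin_zero_iff_int2) 
  have e: "exp (-a*4) < 1" using a by simp
  have D: "a^2+(pi/2)^2 > 0" using a by (simp add: add_pos_nonneg)
  have "Z a 4 = (pi/2) * (1 - exp(-a*4)) / (a^2+(pi/2)^2)"
    unfolding Z_def fsol_def s by (simp add: diff_divide_distrib algebra_simps)
  also have "\<dots> > 0" using e D by (intro divide_pos_pos mult_pos_pos) auto
  finally show ?thesis .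
qed

lemma xa_props:
  assumes a: "a > 0"
  shows "2 < x_a a \<and> x_a a < 4 \<and> zsol a (x_a a) = 0 \<and> (\<forall>x. 0 < x \<and> x < x_a a \<longrightarrow> zsol a x < 0)"
proof -
  let ?S = "{x. x > 0 \<and> Z a x = 0}"
  have xa: "x_a a = Inf ?S" unfolding x_a_def zsol_eq[OF a] ..
  obtain c where c: "2 \<le> c" "c \<le> 4" "Z a c = 0"
    using IVT'[of "Z a" 2 0 4] Z_neg[OF a, of 2] Z4[OF a] Zcont[OF a] by force
  have gt2: "x \<in> ?S \<Longrightarrow> 2 < x" for x using Z_neg[OF a, of x] by force
  have c4: "c < 4" using c Z4[OF a] by (cases "c = 4") auto
  have cS: "c \<in> ?S" using c by auto
  have bdd: "bdd_below ?S" by (rule bdd_belowI[of _ 0]) auto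
  have Seq: "?S = {2..} \<inter> Z a -` {0}" using gt2 by force
  have cl: "closed ?S" unfolding Seq
    by (intro closed_Int closed_atLeast continuous_closed_vimage) (auto intro: DERIV_isCont Z_deriv[OF a])
  have inS: "x_a a \<in> ?S" unfolding xa using cS bdd cl by (intro closed_contains_Inf) auto
  have le: "x_a a \<le> c" unfolding xa using cS bdd by (intro cInf_lower) auto
  have neg: "Z a x < 0" if x: "0 < x" "x < x_a a" for x
  proof (rule ccontr)
    assume "\<not> Z a x < 0"
    then have "Z a x \<ge> 0" by simp
    have x2: "2 < x"
    proof (rule ccontr)
      assume "\<not> 2 < x" then show False using Z_neg[OF a x(1)] \<open>Z a x \<ge> 0\<close> by simp
    qed
    obtain d where d: "2 \<le> d" "d \<le> x" "Z a d = 0"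
      using IVT'[of "Z a" 2 0 x] Z_neg[OF a, of 2] \<open>Z a x \<ge> 0\<close> x2 Zcont[OF a] by force
    then have "d \<in> ?S" by auto
    then have "x_a a \<le> d" unfolding xa using bdd by (intro cInf_lower) auto
    then show False using d x by simp
  qed
  show ?thesis using inS gt2 le c4 neg unfolding zsol_eq[OF a] by force
qed


definition uu :: "real \<Rightarrow> real \<Rightarrow> real" where
  "uu a = fsol a (3*pi/2) ((a * sin (3*pi/2*3) - 3*pi/2 * cos (3*pi/2*3)) * exp (3*a) / (a^2 + (3*pi/2)^2))"

lemma aux0: "e * e' = 1 \<Longrightarrow> -A/D + (A*e/D)*e' = (0::real)"
proof -
  assume "e * e' = 1"
  moreover have "(A*e/D)*e' = A*(e*e')/D" by simp
  ultimately show ?thesis by simp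
qed

lemma uu3: "uu a 3 = 0"
  unfolding uu_def fsol_def by (rule aux0) (simp add: exp_minus mult.commute)

lemma uu_deriv: "a > 0 \<Longrightarrow> (uu a has_real_derivative (-a * uu a x - sin (3*pi/2*x))) (at x)"
  unfolding uu_def by (rule fsol_deriv)

lemma uu_pos:
  assumes a: "a > 0" and x: "11/4 \<le> x" "x < 3"
  shows "uu a x > 0"
proof -
  define W where "W t = exp (a*t) * uu a t" for t
  have dW: "(W has_real_derivative (-exp (a*t) * sin (3*pi/2*t))) (at t)" for t
    unfolding W_def uu_def using w_deriv[OF a] by blast
  have "W 3 < W x"
  proof (rule DERIV_neg_imp_decreasing_open[OF x(2)])
    fix t assume t: "x < t" "t < 3"
    have "sin (3*pi/2*t) = sin ((3*pi/2*t - 4*pi) + 2*pi + 2*pi)" by simp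
    also have "\<dots> = sin (3*pi/2*t - 4*pi)" by (simp only: sin_periodic)
    also have "\<dots> > 0"
    proof (rule sin_gt_zero)
      have "3*pi/2*t - 4*pi = pi * (3/2*t - 4)" by (simp add: algebra_simps)
      moreover have "0 < 3/2*t - 4" "3/2*t - 4 < 1" using t x by auto
      ultimately show "0 < 3*pi/2*t - 4*pi" "3*pi/2*t - 4*pi < pi" by auto
    qed
    finally have "sin (3*pi/2*t) > 0" .
    then show "\<exists>y. (W has_real_derivative y) (at t) \<and> y < 0"
      using dW[of t] by (intro exI[of _ "-exp (a*t) * sin (3*pi/2*t)"]) auto
  next
    show "continuous_on {x..3} W"
      by (meson DERIV_isCont dW continuous_at_imp_continuous_on)
  qed
  then show ?thesis using uu3[of a] by (simp add: W_def zero_less_mult_iff)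
qed

lemma sliding: assumes "t > 2" shows "0 \<in> rhs a t 0"
proof -
  define k where "k = real_of_int (\<lfloor>t\<rfloor> + 1)"
  have k1: "t < k" "k \<le> t + 1" unfolding k_def by linarith+
  define l where "l = 2 * k / t - 2"
  have tp: "t > 0" using assms by simp
  have l1: "-1 < l" unfolding l_def using k1 tp by (simp add: field_simps)
  have l2: "l < 1" unfolding l_def using k1 tp assms by (simp add: field_simps)
  have eq: "pi * t * (1 + l / 2) = of_int (\<lfloor>t\<rfloor> + 1) * pi" unfolding l_def k_def using tp
    by (simp add: field_simps)
  moreover have "sin (of_int (\<lfloor>t\<rfloor> + 1) * pi) = 0" by (rule sin_zero_iff_int2[THEN iffD2]) blast
  ultimately have "sin (pi * t * (1 + l / 2)) = 0" by (simp only: eq)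
  then show ?thesis unfolding rhs_def using l1 l2
    by (intro CollectI exI[of _ l]) auto
qed

lemma floor_piece:
  fixes k :: int and s :: real
  assumes "4 * of_int k \<le> s" "s < 4 * of_int k + 4"
  shows "\<lfloor>s / 4\<rfloor> = k"
  using assms by (intro floor_unique) auto


definition Fd :: "real \<Rightarrow> real \<Rightarrow> real" where
  "Fd a r = (if r < x_a a then zsol a r else 0)"

lemma zsol0: "a > 0 \<Longrightarrow> zsol a 0 = 0" using zsol_eq Z0 by simp

lemma yd_piece:
  fixes k :: int and s :: real
  assumes a: "a > 0" and s: "4 * of_int k \<le> s" "s \<le> 4 * of_int k + 4"
  shows "y_d a s = Fd a (s - 4 * of_int k)"
proof (cases "s < 4 * of_int k + 4")
  case True
  then have "\<lfloor>s / 4\<rfloor> = k" using s by (intro floor_piece) auto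
  then show ?thesis unfolding y_d_def Fd_def Let_def by simp
next
  case False
  then have se: "s = 4 * of_int (k+1)" using s by simp
  have "\<lfloor>s / 4\<rfloor> = k + 1" using se by (intro floor_unique) auto
  then show ?thesis using xa_props[OF a] zsol0[OF a] unfolding y_d_def Fd_def Let_def se by simp
qed

lemma Fd_cont: assumes a: "a > 0" shows "continuous_on {0..4} (Fd a)"
proof -
  have P: "2 < x_a a" "x_a a < 4" "zsol a (x_a a) = 0" using xa_props[OF a] by auto
  have e: "{0..4} = {0..x_a a} \<union> {x_a a..4}" using P by auto
  have cz: "continuous_on {0..x_a a} (zsol a)" unfolding zsol_eq[OF a] by (rule Zcont[OF a])
  have c1: "continuous_on {0..x_a a} (Fd a)"
    by (rule continuous_on_eq[OF cz]) (use P in \<open>auto simp: Fd_def\<close>)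
  have c2: "continuous_on {x_a a..4} (Fd a)"
    by (rule continuous_on_eq[OF continuous_on_const]) (auto simp: Fd_def)
  show ?thesis unfolding e by (intro continuous_on_closed_Un c1 c2) auto
qed

lemma Fd_nonpos: "a > 0 \<Longrightarrow> 0 \<le> r \<Longrightarrow> Fd a r \<le> 0"
  using xa_props[of a] zsol0[of a] unfolding Fd_def
  by (cases "r = 0") (auto simp: less_imp_le)

definition yy :: "real \<Rightarrow> real \<Rightarrow> real" where
  "yy a x = (if x < 3 then uu a x else if x < 4 then 0 else y_d a x)"

definition gg :: "real \<Rightarrow> real \<Rightarrow> real" where
  "gg a t = (if t < 3 then -a * yy a t - sin (pi*t*(1+1/2)) else if t < 4 then 0
     else if t - 4 * of_int \<lfloor>t/4\<rfloor> < x_a a then -a * yy a t - sin (pi*t*(1+(-1)/2)) else 0)"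

definition NN :: "real \<Rightarrow> real set" where
  "NN a = {3} \<union> range (\<lambda>k::int. 4 * of_int k) \<union> range (\<lambda>k::int. 4 * of_int k + x_a a)"

lemma key:
  assumes a: "a > 0" and t: "t \<ge> 11/4" "t \<notin> NN a"
  shows "(yy a has_real_derivative gg a t) (at t) \<and> gg a t \<in> rhs a t (yy a t)"
proof -
  have P: "2 < x_a a" "x_a a < 4" "\<And>x. 0 < x \<Longrightarrow> x < x_a a \<Longrightarrow> zsol a x < 0"
    using xa_props[OF a] by auto
  have t3: "t \<noteq> 3" using t by (auto simp: NN_def)
  consider "t < 3" | "3 < t \<and> t < 4" | "t \<ge> 4" using t3 by linarith
  then show ?thesis
  proof cases
    case 1
    have "(yy a has_real_derivative (-a * uu a t - sin (3*pi/2*t))) (at t)"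
      by (rule has_field_derivative_transform_within_open[OF uu_deriv[OF a], of "{..<3}"])
         (use 1 in \<open>auto simp: yy_def\<close>)
    moreover have e: "pi*t*(1+1/2) = 3*pi/2*t" by (simp add: algebra_simps)
    moreover have "yy a t = uu a t" using 1 by (simp add: yy_def)
    moreover have "uu a t > 0" using uu_pos[OF a t(1) 1] .
    ultimately show ?thesis unfolding rhs_def gg_def e using 1
      by (auto intro!: exI[of _ 1] simp: mult_ac)
  next
    case 2
    have "(yy a has_real_derivative 0) (at t)"
      by (rule has_field_derivative_transform_within_open[of "\<lambda>_. 0::real" 0 t "{3<..<4}"])
         (use 2 in \<open>auto simp: yy_def\<close>)
    moreover have "yy a t = 0" "gg a t = 0" using 2 by (auto simp: yy_def gg_def)
    ultimately show ?thesis using sliding[of t a] 2 by auto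
  next
    case 3
    define k where "k = \<lfloor>t/4\<rfloor>"
    have k: "4 * of_int k \<le> t" "t < 4 * of_int k + 4" unfolding k_def by linarith+
    have k1: "k \<ge> 1" using 3 k by linarith
    have tk: "t \<noteq> 4 * of_int k" "t \<noteq> 4 * of_int k + x_a a" using t by (auto simp: NN_def)
    have yyp: "yy a s = Fd a (s - 4 * of_int k)" if "4 * of_int k \<le> s" "s \<le> 4 * of_int k + 4" for s
    proof -
      have "s \<ge> 4" using that k1 by (smt (verit) of_int_le_iff of_int_1)
      then show ?thesis using yd_piece[OF a that] by (simp add: yy_def)
    qed
    have gt: "gg a t = (if t - 4 * of_int k < x_a a then -a * yy a t - sin (pi*t*(1+(-1)/2)) else 0)"
      using 3 unfolding gg_def k_def by simp
    show ?thesis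
    proof (cases "t - 4 * of_int k < x_a a")
      case True
      have yt: "yy a t = zsol a (t - 4 * of_int k)" using yyp[of t] k True by (simp add: Fd_def)
      have ytn: "yy a t < 0" unfolding yt using P(3)[of "t - 4 * of_int k"] True k tk by simp
      have "((\<lambda>s. Z a (s - 4 * of_int k)) has_real_derivative
          ((- a * Z a (t - 4 * of_int k) - sin (pi * (t - 4 * of_int k) / 2)) * 1)) (at t)"
        by (rule DERIV_chain2[OF Z_deriv[OF a]]) (auto intro!: derivative_eq_intros)
      moreover have "sin (pi * (t - 4 * of_int k) / 2) = sin (pi*t*(1+(-1)/2))"
      proof -
        have "pi * (t - 4 * of_int k) / 2 = pi*t*(1+(-1)/2) - (2*pi) * of_int k"
          by (simp add: field_simps)
        then show ?thesis by (simp only: sin_diff sin_int_2pin cos_int_2pin mult_1_right mult_zero_right diff_zero)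
      qed
      ultimately have "((\<lambda>s. Z a (s - 4 * of_int k)) has_real_derivative gg a t) (at t)"
        using gt True yt zsol_eq[OF a] by simp
      then have "(yy a has_real_derivative gg a t) (at t)"
      proof (rule has_field_derivative_transform_within_open[of _ _ _ "{4 * of_int k<..<4 * of_int k + x_a a}"])
        show "t \<in> {4 * of_int k<..<4 * of_int k + x_a a}" using k True tk by auto
        fix s assume s: "s \<in> {4 * of_int k<..<4 * of_int k + x_a a}"
        then show "Z a (s - 4 * of_int k) = yy a s"
          using yyp[of s] P zsol_eq[OF a] by (auto simp: Fd_def)
      qed auto
      moreover have "gg a t \<in> rhs a t (yy a t)"
        unfolding rhs_def gt using True ytn by (auto intro!: exI[of _ "-1"])
      ultimately show ?thesis by blast
    next
      case False
      then have F2: "4 * of_int k + x_a a < t" using tk by auto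
      have "(yy a has_real_derivative 0) (at t)"
      proof (rule has_field_derivative_transform_within_open[of "\<lambda>_. 0::real" 0 t "{4 * of_int k + x_a a<..<4 * of_int k + 4}"])
        show "t \<in> {4 * of_int k + x_a a<..<4 * of_int k + 4}" using k F2 by auto
        fix s assume s: "s \<in> {4 * of_int k + x_a a<..<4 * of_int k + 4}"
        then show "0 = yy a s" using yyp[of s] P by (auto simp: Fd_def)
      qed auto
      moreover have "yy a t = 0" using yyp[of t] k False by (simp add: Fd_def)
      moreover have "gg a t = 0" using gt False by simp
      ultimately show ?thesis using sliding[of t a] 3 by auto
    qed
  qed
qed


lemma yy_cont:
  assumes a: "a > 0"
  shows "continuous_on {11/4..X} (yy a)"
proof -
  define K where "K = \<lceil>X\<rceil>"
  define U where "U = {11/4..3} \<union> {3..4} \<union> (\<Union>k\<in>{1..K}. {4 * of_int k..4 * of_int k + 4::real})"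
  have c1: "continuous_on {11/4..3} (yy a)"
  proof (rule continuous_on_eq)
    show "continuous_on {11/4..3} (uu a)"
      by (meson DERIV_isCont uu_deriv[OF a] continuous_at_imp_continuous_on)
    show "\<And>x. x \<in> {11/4..3} \<Longrightarrow> uu a x = yy a x"
      using uu3[of a] by (auto simp: yy_def)
  qed
  have y4: "yy a 4 = 0" using yd_piece[OF a, of 1 4] zsol0[OF a] xa_props[OF a]
    by (simp add: yy_def Fd_def)
  have c2: "continuous_on {3..4} (yy a)"
  proof (rule continuous_on_eq)
    show "continuous_on {3..4} (\<lambda>_. 0::real)" by simp
    show "\<And>x. x \<in> {3..4} \<Longrightarrow> 0 = yy a x"
      using y4 by (auto simp: yy_def)
  qed
  have c3: "continuous_on {4 * of_int k..4 * of_int k + 4} (yy a)" if k: "k \<in> {1..K}" for k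
  proof (rule continuous_on_eq)
    show "continuous_on {4 * of_int k..4 * of_int k + 4} (\<lambda>s. Fd a (s - 4 * of_int k))"
      by (rule continuous_on_compose2[OF Fd_cont[OF a]]) (auto intro!: continuous_intros)
    fix s assume s: "s \<in> {4 * of_int k..4 * of_int k + 4::real}"
    have "s \<ge> 4" using s k by (smt (verit) atLeastAtMost_iff of_int_le_iff of_int_1)
    then show "Fd a (s - 4 * of_int k) = yy a s" using yd_piece[OF a, of k s] s
      by (auto simp: yy_def)
  qed
  have cU: "continuous_on U (yy a)" unfolding U_def
    by (intro continuous_on_closed_Un continuous_on_closed_Union c1 c2 c3 closed_Union) auto
  have sub: "{11/4..X} \<subseteq> U"
  proof
    fix s assume s: "s \<in> {11/4..X}"
    show "s \<in> U"
    proof (cases "s \<le> 4")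
      case True then show ?thesis using s unfolding U_def by auto
    next
      case False
      define k where "k = \<lfloor>s/4\<rfloor>"
      have k: "4 * of_int k \<le> s" "s < 4 * of_int k + 4" unfolding k_def by linarith+
      have "1 \<le> k" using k False by linarith
      moreover have "of_int k \<le> (of_int K::real)"
      proof -
        have "(1::real) \<le> of_int k" using \<open>1 \<le> k\<close> by simp
        moreover have "s \<le> X" using s by simp
        ultimately show ?thesis unfolding K_def using k le_of_int_ceiling[of X] by linarith
      qed
      then have "k \<le> K" by simp
      ultimately show ?thesis using k unfolding U_def by auto
    qed
  qed
  show ?thesis by (rule continuous_on_subset[OF cU sub])
qed

lemma NN_neg: "negligible (NN a)"
proof -
  have r: "negligible (range f)" for f :: "int \<Rightarrow> real"
  proof -
    have "range f = \<Union> ((\<lambda>k. {f k}) ` UNIV)" by auto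
    moreover have "negligible (\<Union> ((\<lambda>k. {f k}) ` UNIV))"
      by (rule negligible_countable_Union) auto
    ultimately show ?thesis by simp
  qed
  show ?thesis unfolding NN_def by (intro negligible_Un r negligible_sing)
qed

lemma NN_fin:
  assumes a: "a > 0"
  shows "finite (NN a \<inter> {11/4..X})"
proof -
  have P: "2 < x_a a" "x_a a < 4" using xa_props[OF a] by auto
  let ?S = "{3} \<union> (\<lambda>k::int. 4 * of_int k) ` {-1..\<lceil>X\<rceil>} \<union> (\<lambda>k::int. 4 * of_int k + x_a a) ` {-1..\<lceil>X\<rceil>}"
  have "NN a \<inter> {11/4..X} \<subseteq> ?S"
  proof
    fix s assume s: "s \<in> NN a \<inter> {11/4..X}"
    have cX: "X \<le> of_int \<lceil>X\<rceil>" by simp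
    from s consider "s = 3" | k where "s = 4 * of_int k" | k where "s = 4 * of_int k + x_a a"
      unfolding NN_def by auto
    then show "s \<in> ?S"
    proof cases
      case 1 then show ?thesis by simp
    next
      case (2 k)
      have "-1 \<le> k" "k \<le> \<lceil>X\<rceil>" using s 2 cX by (auto, linarith+)
      then show ?thesis using 2 by auto
    next
      case (3 k)
      have "-1 \<le> k" "k \<le> \<lceil>X\<rceil>" using s 3 cX P by (auto, linarith+)
      then show ?thesis using 3 by auto
    qed
  qed
  moreover have "finite ?S" by simp
  ultimately show ?thesis by (rule finite_subset)
qed

theorem proposition3:
  fixes a :: real
  assumes "a > 0"
  shows "\<exists>x0 y. x0 \<ge> 0 \<and> y x0 > 0 \<and> is_solution a x0 y \<and>
           (\<exists>xT. xT > x0 \<and> y xT = 0 \<and> (\<forall>x\<in>{x0..<xT}. y x \<noteq> 0) \<and>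
                 (\<forall>x>xT. y x \<le> 0)) \<and>
           (\<exists>n::nat. \<forall>x\<ge>4 * real n. y x = y_d a x)"
proof (intro exI conjI)
  have a: "a > 0" by fact
  show "(0::real) \<le> 11/4" by simp
  show "yy a (11/4) > 0" using uu_pos[OF a, of "11/4"] by (simp add: yy_def)
  show "(11/4::real) < 3" by simp
  show "yy a 3 = 0" using uu3[of a] by (simp add: yy_def)
  show "\<forall>x\<in>{11/4..<3}. yy a x \<noteq> 0"
  proof
    fix x :: real assume x: "x \<in> {11/4..<3}"
    then have "uu a x > 0" by (intro uu_pos[OF a]) auto
    then show "yy a x \<noteq> 0" using x by (simp add: yy_def)
  qed
  show "\<forall>x>3. yy a x \<le> 0"
  proof (intro allI impI)
    fix x :: real assume x: "3 < x"
    show "yy a x \<le> 0"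
    proof (cases "x < 4")
      case True then show ?thesis using x by (simp add: yy_def)
    next
      case False
      define k where "k = \<lfloor>x/4\<rfloor>"
      have k: "4 * of_int k \<le> x" "x < 4 * of_int k + 4" unfolding k_def by linarith+
      then show ?thesis using False yd_piece[OF a k(1)] Fd_nonpos[OF a, of "x - 4 * of_int k"]
        by (simp add: yy_def)
    qed
  qed
  show "\<forall>x\<ge>4 * real 1. yy a x = y_d a x" by (simp add: yy_def)
  show "is_solution a (11/4) (yy a)"
    unfolding is_solution_def
  proof (intro exI conjI allI impI ballI)
    show "negligible (NN a)" by (rule NN_neg)
    fix t assume "t \<in> {11/4..} - NN a"
    then show "gg a t \<in> rhs a t (yy a t)" using key[OF a] by auto
  next
    fix x :: real assume x: "11/4 \<le> x"
    have "(gg a has_integral (yy a x - yy a (11/4))) {11/4..x}"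
    proof (rule fundamental_theorem_of_calculus_interior_strong[OF NN_fin[OF a, of x] x])
      fix s assume s: "s \<in> {11/4<..<x} - NN a \<inter> {11/4..x}"
      then have "(yy a has_real_derivative gg a s) (at s)" using key[OF a, of s] by auto
      then show "(yy a has_vector_derivative gg a s) (at s)"
        by (simp add: has_real_derivative_iff_has_vector_derivative)
    next
      show "continuous_on {11/4..x} (yy a)" by (rule yy_cont[OF a])
    qed
    then show "gg a integrable_on {11/4..x}" "yy a x = yy a (11/4) + integral {11/4..x} (gg a)"
      by (auto simp: integral_unique has_integral_integrable)
  qed
qed

end
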